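(* Let $p\in\mathbb{N}_0$ and for $j\ge2$ let $\overline{\eta}_j=(-1)^j(2^j-2)\psi^{(j-1)}(1)$. Then, regarding $\binom{2m}{m}=\frac{\Gamma(2m+1)}{\Gamma(m+1)^2}$ as an analytic function of $m$ near $0$, $$\frac{d^p}{dm^p}\binom{2m}{m}\bigg|_{m=0}=(-1)^p B_p(0,\overline{\eta}_2,\overline{\eta}_3,\dots,\overline{\eta}_p)$$ and $$\frac{d^p}{dm^p}\bigg(\frac{1}{4^m}\binom{2m}{m}\bigg)\bigg|_{m=0}=(-1)^p\sum_{i=0}^{p}\binom{p}{i}(\log 4)^{p-i}B_i(0,\overline{\eta}_2,\dots,\overline{\eta}_i).$$
   Context: $\psi^{(n)}(z)=\frac{d^{n+1}}{dz^{n+1}}\log\Gamma(z)$ is the polygamma function. $B_n(s_1,\dots,s_n)$ denotes the complete Bell polynomial, defined by $\exp\big(\sum_{j\ge1}s_j t^j/j!\big)=\sum_{n\ge0}B_n(s_1,\dots,s_n)t^n/n!$; $B_0=1$. *)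

theory Defs
  imports "HOL-Analysis.Analysis" "HOL-Computational_Algebra.Formal_Power_Series"
begin

text \<open>Complete Bell polynomial B_n(s_1,...,s_n), defined via the exponential generating
  function exp(sum_{j>=1} s_j t^j / j!) = sum_n B_n t^n / n!.  Only s_1..s_n matter;
  s 0 is ignored.\<close>
definition complete_bell :: "nat \<Rightarrow> (nat \<Rightarrow> real) \<Rightarrow> real" where
  "complete_bell n s =
     fact n * fps_nth (fps_exp 1 oo Abs_fps (\<lambda>j. if j = 0 then 0 else s j / fact j)) n"

end

theory Submission
  imports Defs "HOL-Complex_Analysis.Complex_Analysis"
begin


lemma higher_deriv_real_complex:
  fixes f :: "real \<Rightarrow> real" and F :: "complex \<Rightarrow> complex"
  assumes F: "F holomorphic_on S" "open S" and T: "open T" "of_real ` T \<subseteq> S"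
    and eq: "\<And>y. y \<in> T \<Longrightarrow> F (of_real y) = of_real (f y)"
  shows "x \<in> T \<Longrightarrow> (deriv ^^ n) F (of_real x) = of_real ((deriv ^^ n) f x)"
proof (induction n arbitrary: x)
  case 0 then show ?case using eq by simp
next
  case (Suc n x)
  define D where "D = (deriv ^^ Suc n) F (of_real x)"
  have xS: "complex_of_real x \<in> S" using Suc.prems T by auto
  have "((deriv ^^ n) F has_field_derivative D) (at (of_real x))"
    unfolding D_def using has_field_derivative_higher_deriv[OF F xS] .
  hence vd: "((\<lambda>y. (deriv ^^ n) F (of_real y)) has_vector_derivative D) (at x)"
    by (rule has_vector_derivative_real_field)
  have re: "((\<lambda>y. Re ((deriv ^^ n) F (of_real y))) has_field_derivative Re D) (at x)"
    using has_field_derivative_Re[OF vd] .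
  have im: "((\<lambda>y. Im ((deriv ^^ n) F (of_real y))) has_field_derivative Im D) (at x)"
    using has_field_derivative_Im[OF vd] .
  have g: "((deriv ^^ n) f has_field_derivative Re D) (at x)"
    by (rule has_field_derivative_transform_within_open[OF re T(1) Suc.prems])
       (simp add: Suc.IH)
  have "((\<lambda>y. 0) has_field_derivative Im D) (at x)"
    by (rule has_field_derivative_transform_within_open[OF im T(1) Suc.prems])
       (simp add: Suc.IH)
  hence "Im D = 0" using DERIV_const DERIV_unique by blast
  hence "D = of_real (Re D)" by (simp add: complex_eq_iff)
  moreover have "(deriv ^^ Suc n) f x = Re D" using DERIV_imp_deriv[OF g] by simp
  ultimately show ?case unfolding D_def by simp
qed



lemma complete_bell_0: "complete_bell 0 s = 1"
  by (simp add: complete_bell_def)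

lemma complete_bell_Suc:
  "complete_bell (Suc n) s = (\<Sum>i=0..n. real (n choose i) * complete_bell i s * s (Suc (n - i)))"
proof -
  define A :: "real fps" where "A = Abs_fps (\<lambda>j. if j = 0 then 0 else s j / fact j)"
  define E where "E = fps_exp 1 oo A"
  have A0: "fps_nth A (0) = 0" by (simp add: A_def)
  have "fps_deriv E = (fps_deriv (fps_exp 1) oo A) * fps_deriv A"
    unfolding E_def by (rule fps_compose_deriv[OF A0])
  also have "fps_deriv (fps_exp (1::real)) = fps_exp 1" by simp
  finally have dE: "fps_deriv E = E * fps_deriv A" by (simp add: E_def)
  have "of_nat (Suc n) * fps_nth E (Suc n) = fps_nth (E * fps_deriv A) (n)"
    using arg_cong[OF dE, of "\<lambda>f. fps_nth f (n)"] by simp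
  also have "\<dots> = (\<Sum>i=0..n. fps_nth E (i) * (real (Suc (n - i)) * (s (Suc (n - i)) / fact (Suc (n - i)))))"
    by (simp add: fps_mult_nth A_def del: of_nat_Suc)
  also have "\<dots> = (\<Sum>i=0..n. fps_nth E (i) * s (Suc (n - i)) / fact (n - i))"
    by (intro sum.cong refl) (simp add: field_simps del: of_nat_Suc)
  finally have rec: "of_nat (Suc n) * fps_nth E (Suc n) = (\<Sum>i=0..n. fps_nth E (i) * s (Suc (n - i)) / fact (n - i))" .
  have "complete_bell (Suc n) s = fact n * (of_nat (Suc n) * fps_nth E (Suc n))"
    by (simp add: complete_bell_def E_def A_def)
  also have "\<dots> = (\<Sum>i=0..n. fact n * (fps_nth E (i) * s (Suc (n - i)) / fact (n - i)))"
    by (simp only: rec sum_distrib_left)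
  also have "\<dots> = (\<Sum>i=0..n. real (n choose i) * complete_bell i s * s (Suc (n - i)))"
  proof (intro sum.cong refl)
    fix i assume i: "i \<in> {0..n}"
    have "real (n choose i) = fact n / (fact i * fact (n - i))"
      using i by (simp add: binomial_fact)
    thus "fact n * (fps_nth E (i) * s (Suc (n - i)) / fact (n - i)) = real (n choose i) * complete_bell i s * s (Suc (n - i))"
      by (simp add: complete_bell_def E_def A_def field_simps)
  qed
  finally show ?thesis .
qed



lemma higher_deriv_exp_comp:
  fixes H :: "complex \<Rightarrow> complex"
  assumes H: "H holomorphic_on S" "open S" and z: "z \<in> S"
  shows "(deriv ^^ Suc n) (\<lambda>w. exp (H w)) z =
    (\<Sum>i=0..n. of_nat (n choose i) * (deriv ^^ i) (\<lambda>w. exp (H w)) z * (deriv ^^ Suc (n-i)) H z)"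
proof -
  have E: "(\<lambda>w. exp (H w)) holomorphic_on S" using H by (intro holomorphic_intros)
  have dH: "deriv H holomorphic_on S" using H by (intro holomorphic_deriv)
  have dE: "deriv (\<lambda>w. exp (H w)) w = exp (H w) * deriv H w" if "w \<in> S" for w
  proof -
    have "(H has_field_derivative deriv H w) (at w)"
      using H that by (intro holomorphic_derivI) auto
    hence "((\<lambda>w. exp (H w)) has_field_derivative exp (H w) * deriv H w) (at w)"
      by (auto intro!: derivative_eq_intros)
    thus ?thesis by (rule DERIV_imp_deriv)
  qed
  have "(deriv ^^ Suc n) (\<lambda>w. exp (H w)) z = (deriv ^^ n) (deriv (\<lambda>w. exp (H w))) z"
    by (simp del: funpow.simps add: funpow_Suc_right)
  also have "\<dots> = (deriv ^^ n) (\<lambda>w. exp (H w) * deriv H w) z"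
    by (rule higher_deriv_transform_within_open[OF _ _ H(2) z])
       (auto intro: holomorphic_intros E dH H simp: dE holomorphic_deriv[OF E H(2)])
  also have "\<dots> = (\<Sum>i=0..n. of_nat (n choose i) * (deriv ^^ i) (\<lambda>w. exp (H w)) z * (deriv ^^ (n-i)) (deriv H) z)"
    by (rule higher_deriv_mult[OF E dH H(2) z])
  also have "\<dots> = (\<Sum>i=0..n. of_nat (n choose i) * (deriv ^^ i) (\<lambda>w. exp (H w)) z * (deriv ^^ Suc (n-i)) H z)"
    by (simp del: funpow.simps add: funpow_Suc_right)
  finally show ?thesis .
qed

lemma higher_deriv_exp_linear:
  "(deriv ^^ n) (\<lambda>w. exp (c * w)) (0::complex) = c ^ n"
proof -
  have e: "(deriv ^^ n) exp = (exp :: complex \<Rightarrow> complex)" for n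
  proof (induction n)
    case (Suc n)
    have "deriv (exp :: complex \<Rightarrow> complex) = exp"
      by (rule ext, rule DERIV_imp_deriv) (rule DERIV_exp)
    with Suc show ?case by simp
  qed simp
  have "(deriv ^^ n) (\<lambda>w. exp (c * w)) 0 = c ^ n * (deriv ^^ n) exp (c * 0)"
    by (rule higher_deriv_compose_linear[where S=UNIV and T=UNIV]) (auto simp: holomorphic_on_def field_differentiable_within_exp)
  thus ?thesis by (simp add: e)
qed

definition HH :: "complex \<Rightarrow> complex" where
  "HH z = ln_Gamma (2 * z + 1) - 2 * ln_Gamma (z + 1)"

definition Om :: "complex set" where "Om = {z. Re z > -1/2}"

lemma open_Om: "open Om" unfolding Om_def by (rule open_halfspace_Re_gt)

lemma HH_holo: "HH holomorphic_on Om"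
proof -
  have "(\<lambda>z. 2 * z + 1) ` Om \<subseteq> {z. Re z > 0}" by (auto simp: Om_def)
  moreover have "(\<lambda>z. z + 1) ` Om \<subseteq> {z. Re z > 0}" by (auto simp: Om_def)
  moreover have "ln_Gamma holomorphic_on {z. Re z > 0}"
    by (rule holomorphic_ln_Gamma) (auto simp: complex_nonpos_Reals_iff)
  ultimately have "(ln_Gamma \<circ> (\<lambda>z. 2 * z + 1)) holomorphic_on Om" "(ln_Gamma \<circ> (\<lambda>z. z + 1)) holomorphic_on Om"
    by (auto intro!: holomorphic_on_compose_gen[OF _ \<open>ln_Gamma holomorphic_on {z. Re z > 0}\<close>] holomorphic_on_add holomorphic_on_mult holomorphic_on_const holomorphic_on_id)
  hence "(\<lambda>z. ln_Gamma (2 * z + 1)) holomorphic_on Om" "(\<lambda>z. ln_Gamma (z + 1)) holomorphic_on Om"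
    by (simp_all add: o_def)
  thus ?thesis unfolding HH_def[abs_def] by (intro holomorphic_intros)
qed

lemma HH_higher:
  assumes "j \<ge> 1"
  shows "(deriv ^^ j) HH (0::complex) = (2 ^ j - 2) * of_real (Polygamma (j - 1) 1)"
proof -
  define T where "T = {z::complex. Re z > 0}"
  have T: "open T" unfolding T_def by (rule open_halfspace_Re_gt)
  have lT: "ln_Gamma holomorphic_on T"
    unfolding T_def by (rule holomorphic_ln_Gamma) (auto simp: complex_nonpos_Reals_iff)
  have 0: "0 \<in> Om" by (simp add: Om_def)
  have "(ln_Gamma \<circ> (\<lambda>z. 2 * z + 1)) holomorphic_on Om" "(ln_Gamma \<circ> (\<lambda>z. z + 1)) holomorphic_on Om"
    by (auto intro!: holomorphic_on_compose_gen[OF _ lT] holomorphic_on_add holomorphic_on_mult holomorphic_on_const holomorphic_on_id simp: T_def Om_def)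
  hence h1: "(\<lambda>z. ln_Gamma (2 * z + 1)) holomorphic_on Om" "(\<lambda>z. ln_Gamma (z + 1)) holomorphic_on Om"
    by (simp_all add: o_def)
  have a: "(deriv ^^ j) (\<lambda>z. ln_Gamma (2 * z + 1)) (0::complex) = 2 ^ j * (deriv ^^ j) ln_Gamma (2 * 0 + 1)"
    by (rule higher_deriv_compose_linear'[OF lT open_Om T 0]) (auto simp: Om_def T_def)
  have b: "(deriv ^^ j) (\<lambda>z. ln_Gamma (1 * z + 1)) (0::complex) = 1 ^ j * (deriv ^^ j) ln_Gamma (1 * 0 + 1)"
    by (rule higher_deriv_compose_linear'[OF lT open_Om T 0]) (auto simp: Om_def T_def)
  have c: "(deriv ^^ j) (\<lambda>z. 2 * ln_Gamma (z + 1)) (0::complex) = 2 * (deriv ^^ j) (\<lambda>z. ln_Gamma (z + 1)) 0"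
    by (rule higher_deriv_cmult[OF h1(2) 0 open_Om])
  have l1: "(deriv ^^ j) ln_Gamma (1::complex) = of_real (Polygamma (j - 1) 1)"
    using assms by (subst higher_deriv_ln_Gamma_complex) (auto simp: complex_nonpos_Reals_iff Polygamma_of_real[symmetric])
  have "(deriv ^^ j) HH 0 = (deriv ^^ j) (\<lambda>z. ln_Gamma (2 * z + 1)) 0 - (deriv ^^ j) (\<lambda>z. 2 * ln_Gamma (z + 1)) 0"
    unfolding HH_def[abs_def]
    by (rule higher_deriv_diff[OF h1(1) _ open_Om 0]) (intro holomorphic_intros h1)
  also have "\<dots> = 2 ^ j * of_real (Polygamma (j - 1) 1) - 2 * of_real (Polygamma (j - 1) 1)"
    using a b c l1 by simp
  finally show ?thesis by (simp add: algebra_simps)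
qed


definition sS :: "nat \<Rightarrow> real" where
  "sS j = (if j = 1 then 0 else (-1) ^ j * (2 ^ j - 2) * Polygamma (j - 1) (1::real))"

lemma HH_higher_s:
  assumes "j \<ge> 1"
  shows "(deriv ^^ j) HH (0::complex) = of_real ((-1) ^ j * sS j)"
proof -
  have "(deriv ^^ j) HH (0::complex) = of_real ((2 ^ j - 2) * Polygamma (j - 1) 1)"
    using HH_higher[OF assms] by simp
  also have "(2 ^ j - 2) * Polygamma (j - 1) (1::real) = (-1) ^ j * sS j"
  proof (cases "j = 1")
    case False
    have m1: "((-1::real) ^ j) * (-1) ^ j = 1" by (induct j) auto
    show ?thesis using False unfolding sS_def
      by (simp only: if_False mult.assoc[symmetric] m1 mult_1_left)
  qed (simp add: sS_def)
  finally show ?thesis .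
qed

definition fR :: "real \<Rightarrow> real" where
  "fR m = Gamma (2 * m + 1) / Gamma (m + 1) ^ 2"

lemma T_Om: "complex_of_real ` {-1/2<..} \<subseteq> Om"
  by (auto simp: Om_def)

lemma F_eq:
  assumes "y \<in> {-1/2<..}"
  shows "exp (HH (complex_of_real y)) = complex_of_real (fR y)"
proof -
  have y1: "2 * y + 1 > 0" "y + 1 > 0" using assms by auto
  have h: "HH (complex_of_real y) = of_real (ln_Gamma (2 * y + 1) - 2 * ln_Gamma (y + 1))"
    unfolding HH_def using ln_Gamma_complex_of_real[OF y1(1)] ln_Gamma_complex_of_real[OF y1(2)]
    by simp
  have "exp (HH (complex_of_real y)) = of_real (exp (ln_Gamma (2 * y + 1) - 2 * ln_Gamma (y + 1)))"
    unfolding h by (rule exp_of_real)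
  also have "exp (ln_Gamma (2 * y + 1) - 2 * ln_Gamma (y + 1)) = fR y"
    unfolding fR_def Gamma_real_pos_exp[OF y1(1)] Gamma_real_pos_exp[OF y1(2)]
    by (simp only: exp_diff exp_double)
  finally show ?thesis .
qed

lemma E_holo: "(\<lambda>z. exp (HH z)) holomorphic_on Om"
  by (rule holomorphic_on_exp'[OF HH_holo])

lemma F_higher:
  "(deriv ^^ n) (\<lambda>z. exp (HH z)) (0::complex) = of_real ((-1) ^ n * complete_bell n sS)"
proof (induction n rule: less_induct)
  case (less n)
  show ?case
  proof (cases n)
    case 0
    have "exp (HH (complex_of_real 0)) = complex_of_real (fR 0)" by (rule F_eq) simp
    then show ?thesis using 0 by (simp add: complete_bell_0 fR_def)
  next
    case (Suc m)
    have z: "(0::complex) \<in> Om" by (simp add: Om_def)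
    have "(deriv ^^ Suc m) (\<lambda>w. exp (HH w)) 0 =
      (\<Sum>i=0..m. of_nat (m choose i) * (deriv ^^ i) (\<lambda>w. exp (HH w)) 0 * (deriv ^^ Suc (m-i)) HH 0)"
      by (rule higher_deriv_exp_comp[OF HH_holo open_Om z])
    also have "\<dots> = (\<Sum>i=0..m. of_real ((-1) ^ Suc m * (real (m choose i) * complete_bell i sS * sS (Suc (m - i)))))"
    proof (intro sum.cong refl)
      fix i assume i: "i \<in> {0..m}"
      have pw: "(-1::real) ^ i * (-1) ^ Suc (m - i) = (-1) ^ Suc m"
        using i by (simp flip: power_add)
      have "(deriv ^^ i) (\<lambda>w. exp (HH w)) 0 = of_real ((-1) ^ i * complete_bell i sS)"
        using less.IH[of i] i Suc by simp
      moreover have "(deriv ^^ Suc (m - i)) HH 0 = of_real ((-1) ^ Suc (m - i) * sS (Suc (m - i)))"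
        by (rule HH_higher_s) simp
      ultimately show "of_nat (m choose i) * (deriv ^^ i) (\<lambda>w. exp (HH w)) 0 * (deriv ^^ Suc (m-i)) HH 0 =
          of_real ((-1) ^ Suc m * (real (m choose i) * complete_bell i sS * sS (Suc (m - i))))"
        by (simp only: pw[symmetric] of_real_mult of_real_of_nat_eq) (simp add: algebra_simps)
    qed
    also have "\<dots> = of_real ((-1) ^ Suc m * complete_bell (Suc m) sS)"
      by (simp only: complete_bell_Suc sum_distrib_left of_real_sum)
    finally show ?thesis using Suc by simp
  qed
qed

lemma part1: "(deriv ^^ p) fR 0 = (-1) ^ p * complete_bell p sS"
proof -
  have "(deriv ^^ p) (\<lambda>z. exp (HH z)) (of_real 0) = of_real ((deriv ^^ p) fR 0)"
    by (rule higher_deriv_real_complex[OF E_holo open_Om _ T_Om F_eq]) auto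
  hence "of_real ((-1) ^ p * complete_bell p sS) = (of_real ((deriv ^^ p) fR 0) :: complex)"
    unfolding of_real_0 F_higher .
  from this[unfolded of_real_eq_iff] show ?thesis by (rule sym)
qed

definition gR :: "real \<Rightarrow> real" where
  "gR m = Gamma (2 * m + 1) / Gamma (m + 1) ^ 2 / 4 powr m"

lemma part2: "(deriv ^^ p) gR 0 = (-1) ^ p * (\<Sum>i\<le>p. real (p choose i) * ln 4 ^ (p - i) * complete_bell i sS)"
proof -
  define c :: complex where "c = - of_real (ln 4)"
  define G where "G = (\<lambda>z. exp (HH z) * exp (c * z))"
  have eh: "(\<lambda>z. exp (c * z)) holomorphic_on Om" by (intro holomorphic_intros)
  have G: "G holomorphic_on Om" unfolding G_def by (rule holomorphic_on_mult[OF E_holo eh])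
  have Geq: "G (of_real y) = of_real (gR y)" if "y \<in> {-1/2<..}" for y
  proof -
    have "G (of_real y) = of_real (fR y) * exp (of_real (- (ln 4 * y)))"
      unfolding G_def c_def F_eq[OF that] by simp
    also have "\<dots> = of_real (fR y) * of_real (exp (- (ln 4 * y)))"
      by (simp only: exp_of_real)
    also have "\<dots> = of_real (gR y)"
      by (simp add: gR_def fR_def powr_def exp_minus field_simps)
    finally show ?thesis .
  qed
  have z: "(0::complex) \<in> Om" by (simp add: Om_def)
  have "(deriv ^^ p) G 0 = (\<Sum>i=0..p. of_nat (p choose i) * (deriv ^^ i) (\<lambda>z. exp (HH z)) 0 * (deriv ^^ (p-i)) (\<lambda>z. exp (c * z)) 0)"
    unfolding G_def by (rule higher_deriv_mult[OF E_holo eh open_Om z])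
  also have "\<dots> = (\<Sum>i=0..p. of_real ((-1) ^ p * (real (p choose i) * ln 4 ^ (p - i) * complete_bell i sS)))"
  proof (intro sum.cong refl)
    fix i assume i: "i \<in> {0..p}"
    have pw: "(-1::real) ^ i * (-1) ^ (p - i) = (-1) ^ p"
      using i by (simp flip: power_add)
    have "c ^ (p - i) = of_real ((-1) ^ (p - i) * ln 4 ^ (p - i))"
      unfolding c_def by (simp add: power_minus')
    then show "of_nat (p choose i) * (deriv ^^ i) (\<lambda>z. exp (HH z)) 0 * (deriv ^^ (p-i)) (\<lambda>z. exp (c * z)) 0 =
        of_real ((-1) ^ p * (real (p choose i) * ln 4 ^ (p - i) * complete_bell i sS))"
      unfolding F_higher higher_deriv_exp_linear
      by (simp only: pw[symmetric] of_real_mult of_real_of_nat_eq) (simp add: algebra_simps)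
  qed
  also have "\<dots> = of_real ((-1) ^ p * (\<Sum>i\<le>p. real (p choose i) * ln 4 ^ (p - i) * complete_bell i sS))"
    by (simp only: sum_distrib_left of_real_sum atLeast0AtMost)
  finally have 1: "(deriv ^^ p) G 0 = \<dots>" .
  have "(deriv ^^ p) G (of_real 0) = of_real ((deriv ^^ p) gR 0)"
    by (rule higher_deriv_real_complex[OF G open_Om _ T_Om Geq]) auto
  hence "of_real ((-1) ^ p * (\<Sum>i\<le>p. real (p choose i) * ln 4 ^ (p - i) * complete_bell i sS)) = (of_real ((deriv ^^ p) gR 0) :: complex)"
    unfolding of_real_0 1 .
  from this[unfolded of_real_eq_iff] show ?thesis by (rule sym)
qed

theorem mainTheorem6:
  fixes p :: nat
  defines "eta \<equiv> (\<lambda>j::nat. (-1) ^ j * (2 ^ j - 2) * Polygamma (j - 1) (1::real))"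
  defines "s \<equiv> (\<lambda>j::nat. if j = 1 then 0 else eta j)"
  shows "((deriv ^^ p) (\<lambda>m::real. Gamma (2 * m + 1) / Gamma (m + 1) ^ 2) 0
           = (-1) ^ p * complete_bell p s)
      \<and> ((deriv ^^ p) (\<lambda>m::real. Gamma (2 * m + 1) / Gamma (m + 1) ^ 2 / 4 powr m) 0
           = (-1) ^ p * (\<Sum>i\<le>p. real (p choose i) * ln 4 ^ (p - i) * complete_bell i s))"
proof -
  have s: "s = sS" unfolding s_def eta_def sS_def by (rule ext) simp
  have f: "(\<lambda>m::real. Gamma (2 * m + 1) / Gamma (m + 1) ^ 2) = fR" by (rule ext) (simp add: fR_def)
  have g: "(\<lambda>m::real. Gamma (2 * m + 1) / Gamma (m + 1) ^ 2 / 4 powr m) = gR" by (rule ext) (simp add: gR_def)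
  show ?thesis unfolding s f g using part1 part2 by simp
qed

end
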